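(* For each $n \geq 2$ there is a constant $M_n$ such that for every polynomial $p$ in $n$ variables, \[ \|\Gamma p\|_{\overline{\mathbb{D}}^n} \leq M_n \|p\|_{\overline{\mathbb{D}}^n}. \] Moreover, one may take $M_2 \leq 4.07$ and $M_3 \leq 16.6$.
   Context: $\mathbb{D}$ is the open unit disk in $\mathbb{C}$ and $\|f\|_X = \sup_{z\in X}|f(z)|$. For a multi-index $\alpha\in\mathbb{Z}_{\ge0}^n$, $|\alpha|=\sum\alpha_j$, $\alpha!=\alpha_1!\cdots\alpha_n!$. For $p(z)=\sum_\alpha c_\alpha z^\alpha$, define $\Gamma p(z) = \sum_\alpha c_\alpha \frac{\alpha!}{|\alpha|!} z^\alpha$. *)

theory Defs
  imports "HOL-Analysis.Analysis"
begin

text \<open>Multi-indices in n variables are functions alpha :: nat => nat vanishing at j >= n.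
A polynomial in n variables is given by its coefficient function
c :: (nat => nat) => complex, finitely supported on such multi-indices.\<close>

definition is_mpoly :: "nat \<Rightarrow> ((nat \<Rightarrow> nat) \<Rightarrow> complex) \<Rightarrow> bool" where
  "is_mpoly n c \<longleftrightarrow> finite {\<alpha>. c \<alpha> \<noteq> 0} \<and> (\<forall>\<alpha>. c \<alpha> \<noteq> 0 \<longrightarrow> (\<forall>j\<ge>n. \<alpha> j = 0))"

definition mpoly_eval :: "nat \<Rightarrow> ((nat \<Rightarrow> nat) \<Rightarrow> complex) \<Rightarrow> (nat \<Rightarrow> complex) \<Rightarrow> complex" where
  "mpoly_eval n c z = (\<Sum>\<alpha>\<in>{\<alpha>. c \<alpha> \<noteq> 0}. c \<alpha> * (\<Prod>j<n. z j ^ \<alpha> j))"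

definition Gamma_coeff :: "nat \<Rightarrow> ((nat \<Rightarrow> nat) \<Rightarrow> complex) \<Rightarrow> ((nat \<Rightarrow> nat) \<Rightarrow> complex)" where
  "Gamma_coeff n c = (\<lambda>\<alpha>. c \<alpha> * of_nat (\<Prod>j<n. fact (\<alpha> j)) / of_nat (fact (\<Sum>j<n. \<alpha> j)))"

definition closed_polydisc :: "nat \<Rightarrow> (nat \<Rightarrow> complex) set" where
  "closed_polydisc n = {z. (\<forall>j<n. norm (z j) \<le> 1) \<and> (\<forall>j\<ge>n. z j = 0)}"

definition supnorm :: "'a set \<Rightarrow> ('a \<Rightarrow> complex) \<Rightarrow> real" where
  "supnorm X f = (SUP z\<in>X. norm (f z))"

end

theory Submission
  imports Defs "HOL-Complex_Analysis.Complex_Analysis"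
begin


lemma mono_int: "((\<lambda>s::real. s ^ a) has_integral (1 / real (Suc a))) {0..1}"
proof -
  have "((\<lambda>s::real. s ^ a) has_integral ((\<lambda>s. s ^ Suc a / real (Suc a)) 1 - (\<lambda>s. s ^ Suc a / real (Suc a)) 0)) {0..1}"
    apply (rule fundamental_theorem_of_calculus)
     apply simp
    apply (auto intro!: derivative_eq_intros simp: has_real_derivative_iff_has_vector_derivative[symmetric])
    apply (cases a) apply (auto simp: field_simps)
    done
  then show ?thesis by simp
qed

lemma aux_beta:
  fixes X Y W p q :: real assumes "W>0" "p\<ge>0" "q\<ge>0"
  shows "X*Y/W - ((p+1)*X)*Y/((p+q+2)*W) = X*((q+1)*Y)/((p+q+2)*W)"
proof -
  have n: "p+q+2 \<noteq> 0" using assms by auto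
  have L: "X*Y/W = X*Y*(p+q+2)/((p+q+2)*W)" using n by simp
  have "X*Y*(p+q+2)/((p+q+2)*W) - ((p+1)*X)*Y/((p+q+2)*W) = (X*Y*(p+q+2) - ((p+1)*X)*Y)/((p+q+2)*W)"
    by (simp add: diff_divide_distrib)
  moreover have "X*Y*(p+q+2) - ((p+1)*X)*Y = X*((q+1)*Y)" by algebra
  ultimately show ?thesis using L by simp
qed

lemma beta_int: "((\<lambda>s::real. s ^ a * (1 - s) ^ b) has_integral (fact a * fact b / fact (a + b + 1))) {0..1}"
proof (induction b arbitrary: a)
  case 0
  have "fact a / (fact a + fact a * real a) = 1/(1+real a)"
  proof -
    have "fact a + fact a * real a = (fact a::real) * (1+real a)" by (simp add: algebra_simps)
    then show ?thesis by simp
  qed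
  then show ?case using mono_int[of a] by (simp add: fact_Suc)
next
  case (Suc b)
  have "((\<lambda>s::real. s ^ a * (1 - s) ^ b - s ^ Suc a * (1 - s) ^ b) has_integral
     (fact a * fact b / fact (a + b + 1) - fact (Suc a) * fact b / fact (Suc a + b + 1))) {0..1}"
    by (intro has_integral_diff Suc)
  moreover have "(\<lambda>s::real. s ^ a * (1 - s) ^ b - s ^ Suc a * (1 - s) ^ b) = (\<lambda>s. s ^ a * (1 - s) ^ Suc b)"
    by (auto simp: algebra_simps)
  moreover have "(fact a * fact b / fact (a + b + 1) - fact (Suc a) * fact b / fact (Suc a + b + 1) :: real)
     = fact a * fact (Suc b) / fact (a + Suc b + 1)"
  proof -
    define W :: real where "W = fact (a+b+1)"
    have W0: "W > 0" by (simp add: W_def)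
    have e1: "(fact (Suc a + b + 1)::real) = (real a + real b + 2) * W" unfolding W_def by (simp add: algebra_simps)
    have e2: "(fact (a + Suc b + 1)::real) = (real a + real b + 2) * W" unfolding W_def by (simp add: algebra_simps)
    have n: "real a + real b + 2 \<noteq> 0" by simp
    have e3: "(fact (Suc a)::real) = (real a + 1) * fact a" by simp
    have e4: "(fact (Suc b)::real) = (real b + 1) * fact b" by simp
    show ?thesis unfolding e1 e2 e3 e4 W_def[symmetric]
      using aux_beta[OF W0, of "real a" "real b" "fact a" "fact b"] by (simp only: mult.assoc)
  qed
  ultimately show ?case by simp
qed

definition Bt :: "nat \<Rightarrow> nat \<Rightarrow> real" where
  "Bt i j = fact i * fact j / fact (i + j + 1)"

lemma aux_rat:
  fixes X Y Z p q :: real assumes "X>0" "Y>0" "Z>0" "p\<ge>0" "q\<ge>0"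
  shows "((p+1)*X*((q+1)*Y))/((p+q+2)*Z) = 0 + 0 - (p+1)*X*((q+1)*Y)/((p+q+3)*((p+q+2)*Z))
     + ((p+1)*(X*((q+2)*((q+1)*Y)))/((p+q+3)*((p+q+2)*Z)) + (q+1)*((p+2)*((p+1)*X)*Y)/((p+q+3)*((p+q+2)*Z)))"
proof -
  define D where "D = (p+q+3)*((p+q+2)*Z)"
  have n3: "p+q+3 \<noteq> 0" using assms by auto
  have L: "((p+1)*X*((q+1)*Y))/((p+q+2)*Z) = ((p+1)*X*((q+1)*Y)*(p+q+3))/D"
    unfolding D_def using n3 by simp
  have R: "0 + 0 - (p+1)*X*((q+1)*Y)/D + ((p+1)*(X*((q+2)*((q+1)*Y)))/D + (q+1)*((p+2)*((p+1)*X)*Y)/D)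
     = ((p+1)*(X*((q+2)*((q+1)*Y))) + (q+1)*((p+2)*((p+1)*X)*Y) - (p+1)*X*((q+1)*Y))/D"
    by (simp add: add_divide_distrib diff_divide_distrib)
  have N: "(p+1)*X*((q+1)*Y)*(p+q+3) = (p+1)*(X*((q+2)*((q+1)*Y))) + (q+1)*((p+2)*((p+1)*X)*Y) - (p+1)*X*((q+1)*Y)"
    by algebra
  show ?thesis using L R N unfolding D_def by simp
qed

lemma m2_identity:
  "real (fact a * fact b) / real (fact (a+b)) =
     0^b + 0^a - Bt a b + (real a * Bt (a-1) (b+1) + real b * Bt (a+1) (b-1))"
proof (cases a)
  case 0
  then show ?thesis
  proof (cases b)
    case 0 then show ?thesis using \<open>a = 0\<close> by (simp add: Bt_def)
  next
    case (Suc b')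
    have "real b * Bt 1 (b-1) = Bt 0 b"
      unfolding Bt_def using Suc by (simp del: fact_Suc add: fact_Suc[of b'] algebra_simps)
    moreover have "(fact b'::real) + real b' * fact b' > 0" by (intro add_pos_nonneg) auto
    ultimately show ?thesis using \<open>a = 0\<close> Suc by simp
  qed
next
  case (Suc a')
  then show ?thesis
  proof (cases b)
    case 0 
    have "real a * Bt (a-1) 1 = Bt a 0"
      unfolding Bt_def using Suc by (simp del: fact_Suc add: fact_Suc[of a'] algebra_simps)
    moreover have "(fact a'::real) + real a' * fact a' > 0" by (intro add_pos_nonneg) auto
    ultimately show ?thesis using \<open>b = 0\<close> Suc by simp
  next
    case (Suc b')
    define Z :: real where "Z = fact (a' + b' + 1)"
    have Z0: "Z > 0" by (simp add: Z_def)
    have e1: "(fact (Suc a' + Suc b')::real) = (real a' + real b' + 2) * Z"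
      unfolding Z_def by (simp add: fact_Suc algebra_simps)
    have e2: "(fact (Suc a' + Suc b' + 1)::real) = (real a' + real b' + 3) * ((real a' + real b' + 2) * Z)"
      unfolding Z_def by (simp add: fact_Suc algebra_simps)
    have e3: "(fact (a' + (Suc b' + 1) + 1)::real) = (real a' + real b' + 3) * ((real a' + real b' + 2) * Z)"
      unfolding Z_def by (simp add: fact_Suc algebra_simps)
    have e4: "(fact (Suc a' + 1 + b' + 1)::real) = (real a' + real b' + 3) * ((real a' + real b' + 2) * Z)"
      unfolding Z_def by (simp add: fact_Suc algebra_simps)
    have e5: "(fact (Suc b' + 1)::real) = (real b'+2) * ((real b' + 1) * fact b')" by (simp add: fact_Suc algebra_simps)
    have e6: "(fact (Suc a' + 1)::real) = (real a'+2) * ((real a' + 1) * fact a')" by (simp add: fact_Suc algebra_simps)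
    have e7: "(fact (Suc a')::real) = (real a'+1) * fact a'" by (simp add: fact_Suc)
    have e8: "(fact (Suc b')::real) = (real b'+1) * fact b'" by (simp add: fact_Suc)
    have "real (fact a * fact b) / real (fact (a+b)) = ((real a'+1)*fact a'*((real b'+1)*fact b'))/((real a'+real b'+2)*Z)"
      using \<open>a = Suc a'\<close> Suc e1 e7 e8 by (simp del: fact_Suc)
    also have "\<dots> = 0 + 0 - (real a'+1)*fact a'*((real b'+1)*fact b')/((real a'+real b'+3)*((real a'+real b'+2)*Z))
     + ((real a'+1)*(fact a'*((real b'+2)*((real b'+1)*fact b')))/((real a'+real b'+3)*((real a'+real b'+2)*Z)) + (real b'+1)*((real a'+2)*((real a'+1)*fact a')*fact b')/((real a'+real b'+3)*((real a'+real b'+2)*Z)))"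
      by (rule aux_rat) (use Z0 in auto)
    also have "\<dots> = 0^b + 0^a - Bt a b + (real a * Bt (a-1) (b+1) + real b * Bt (a+1) (b-1))"
      using \<open>a = Suc a'\<close> Suc unfolding Bt_def
      by (simp only: e2 e3 e4 e5 e6 e7 e8 diff_Suc_1 of_nat_Suc) (simp add: algebra_simps)
    finally show ?thesis .
  qed
qed



lemma two_var:
  fixes c :: "'s \<Rightarrow> complex" and a b :: "'s \<Rightarrow> nat"
  assumes fin: "finite S"
    and hyp: "\<And>x y. norm x \<le> 1 \<Longrightarrow> norm y \<le> 1 \<Longrightarrow> norm (\<Sum>\<sigma>\<in>S. c \<sigma> * x ^ a \<sigma> * y ^ b \<sigma>) \<le> K"
  shows "norm (\<Sum>\<sigma>\<in>S. c \<sigma> * (of_nat (fact (a \<sigma>) * fact (b \<sigma>)) / of_nat (fact (a \<sigma> + b \<sigma>)))) \<le> 4 * K"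
proof -
  define F where "F x y = (\<Sum>\<sigma>\<in>S. c \<sigma> * x ^ a \<sigma> * y ^ b \<sigma>)" for x y :: complex
  have "norm (\<Sum>\<sigma>\<in>S. c \<sigma> * 0 ^ a \<sigma> * 0 ^ b \<sigma>) \<le> K" by (rule hyp) simp_all
  then have K0: "0 \<le> K" by (rule order_trans[OF norm_ge_zero])
  define g where "g s = F (of_real s) (of_real (1 - s))" for s :: real
  have g_eq: "g = (\<lambda>s. \<Sum>\<sigma>\<in>S. c \<sigma> * of_real (s ^ a \<sigma> * (1 - s) ^ b \<sigma>))"
    by (simp add: g_def F_def mult.assoc fun_eq_iff)
  define I1 where "I1 = (\<Sum>\<sigma>\<in>S. c \<sigma> * of_real (Bt (a \<sigma>) (b \<sigma>)))"
  have I1: "(g has_integral I1) {0..1}"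
    unfolding g_eq I1_def Bt_def
    by (intro has_integral_sum fin has_integral_mult_right has_integral_of_real beta_int)
  have hlp: "cmod (1 - complex_of_real t) = \<bar>1 - t\<bar>" for t
    by (metis of_real_1 of_real_diff norm_of_real)
  have g_bd: "norm (g s) \<le> K" if "s \<in> cbox 0 1" for s
    using that unfolding g_def F_def by (intro hyp) (auto simp: hlp)
  have nI1: "norm I1 \<le> K"
    using has_integral_bound[OF K0 I1[folded cbox_interval] g_bd] by simp
  define D where "D s = (\<Sum>\<sigma>\<in>S. c \<sigma> * of_real (real (a \<sigma>) * s ^ (a \<sigma> - 1) * (1 - s) ^ (b \<sigma> + 1)
       + real (b \<sigma>) * s ^ (a \<sigma> + 1) * (1 - s) ^ (b \<sigma> - 1)))" for s :: real
  define I2 where "I2 = (\<Sum>\<sigma>\<in>S. c \<sigma> * of_real (real (a \<sigma>) * Bt (a \<sigma> - 1) (b \<sigma> + 1)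
       + real (b \<sigma>) * Bt (a \<sigma> + 1) (b \<sigma> - 1)))"
  have I2: "(D has_integral I2) {0..1}"
    unfolding D_def[abs_def] I2_def Bt_def mult.assoc
    by (intro has_integral_sum fin has_integral_mult_right has_integral_of_real has_integral_add beta_int)
  define h where "h s l = F (of_real s + l * of_real (1 - s)) (of_real (1 - s) + l * of_real s)" for s :: real and l
  have hder: "(h s has_field_derivative D s) (at 0)" for s
  proof -
    have "(h s has_field_derivative (\<Sum>\<sigma>\<in>S. c \<sigma> * (of_nat (a \<sigma>) * (of_real s + 0 * of_real (1 - s)) ^ (a \<sigma> - 1) * (of_real (1-s))
       * (of_real (1 - s) + 0 * of_real s) ^ b \<sigma> + (of_real s + 0 * of_real (1 - s)) ^ a \<sigma> * (of_nat (b \<sigma>) * (of_real (1 - s) + 0 * of_real s) ^ (b \<sigma> - 1) * of_real s)))) (at 0)"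
      unfolding h_def F_def by (auto intro!: derivative_eq_intros sum.cong simp: algebra_simps)
    moreover have "(\<Sum>\<sigma>\<in>S. c \<sigma> * (of_nat (a \<sigma>) * (of_real s + 0 * of_real (1 - s)) ^ (a \<sigma> - 1) * (of_real (1-s))
       * (of_real (1 - s) + 0 * of_real s) ^ b \<sigma> + (of_real s + 0 * of_real (1 - s)) ^ a \<sigma> * (of_nat (b \<sigma>) * (of_real (1 - s) + 0 * of_real s) ^ (b \<sigma> - 1) * of_real s))) = D s"
      unfolding D_def by (intro sum.cong refl) (simp add: algebra_simps)
    ultimately show ?thesis by simp
  qed
  have D_bd: "norm (D s) \<le> K" if "s \<in> cbox 0 1" for s
  proof -
    have s01: "0 \<le> s" "s \<le> 1" using that by auto
    have "norm ((deriv ^^ 1) (h s) 0) \<le> fact 1 * K / 1 ^ 1"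
    proof (rule Cauchy_inequality)
      show "h s holomorphic_on ball 0 1" unfolding h_def F_def by (intro holomorphic_intros)
      show "continuous_on (cball 0 1) (h s)" unfolding h_def F_def by (intro continuous_intros)
      fix x :: complex assume "norm (0 - x) = 1"
      then have x1: "norm x = 1" by simp
      have n1: "norm (of_real s + x * of_real (1 - s)) \<le> 1"
      proof -
        have "norm (of_real s + x * of_real (1 - s)) \<le> norm (of_real s :: complex) + norm (x * of_real (1 - s))"
          by (rule norm_triangle_ineq)
        also have "\<dots> = s + (1 - s)" using s01 x1 by (simp add: norm_mult hlp)
        finally show ?thesis by simp
      qed
      have n2: "norm (of_real (1 - s) + x * of_real s) \<le> 1"
      proof -
        have "norm (of_real (1 - s) + x * of_real s) \<le> norm (of_real (1 - s) :: complex) + norm (x * of_real s)"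
          by (rule norm_triangle_ineq)
        also have "\<dots> = (1 - s) + s" using s01 x1 by (simp add: norm_mult hlp)
        finally show ?thesis by simp
      qed
      show "norm (h s x) \<le> K" unfolding h_def F_def by (rule hyp[OF n1 n2])
    qed simp
    moreover have "deriv (h s) 0 = D s" by (rule DERIV_imp_deriv[OF hder])
    ultimately show ?thesis by simp
  qed
  have nI2: "norm I2 \<le> K"
    using has_integral_bound[OF K0 I2[folded cbox_interval] D_bd] by simp
  have F10: "norm (F 1 0) \<le> K" unfolding F_def by (rule hyp) auto
  have F01: "norm (F 0 1) \<le> K" unfolding F_def by (rule hyp) auto
  have key: "(\<Sum>\<sigma>\<in>S. c \<sigma> * (of_nat (fact (a \<sigma>) * fact (b \<sigma>)) / of_nat (fact (a \<sigma> + b \<sigma>)))) = F 1 0 + F 0 1 - I1 + I2"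
  proof -
    have "(\<Sum>\<sigma>\<in>S. c \<sigma> * (of_nat (fact (a \<sigma>) * fact (b \<sigma>)) / of_nat (fact (a \<sigma> + b \<sigma>))))
       = (\<Sum>\<sigma>\<in>S. c \<sigma> * 0 ^ b \<sigma> + c \<sigma> * 0 ^ a \<sigma> - c \<sigma> * of_real (Bt (a \<sigma>) (b \<sigma>)) + c \<sigma> * of_real (real (a \<sigma>) * Bt (a \<sigma> - 1) (b \<sigma> + 1)
       + real (b \<sigma>) * Bt (a \<sigma> + 1) (b \<sigma> - 1)))"
    proof (intro sum.cong refl)
      fix \<sigma> assume "\<sigma> \<in> S"
      have "(of_nat (fact (a \<sigma>) * fact (b \<sigma>)) / of_nat (fact (a \<sigma> + b \<sigma>)) :: complex)
        = of_real (real (fact (a \<sigma>) * fact (b \<sigma>)) / real (fact (a \<sigma> + b \<sigma>)))" by simp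
      also have "\<dots> = of_real (0^b \<sigma> + 0^a \<sigma> - Bt (a \<sigma>) (b \<sigma>) + (real (a \<sigma>) * Bt (a \<sigma> - 1) (b \<sigma> + 1)
         + real (b \<sigma>) * Bt (a \<sigma> + 1) (b \<sigma> - 1)))" by (simp only: m2_identity)
      finally have eq: "(of_nat (fact (a \<sigma>) * fact (b \<sigma>)) / of_nat (fact (a \<sigma> + b \<sigma>)) :: complex) = 
         of_real (0^b \<sigma> + 0^a \<sigma> - Bt (a \<sigma>) (b \<sigma>) + (real (a \<sigma>) * Bt (a \<sigma> - 1) (b \<sigma> + 1)
         + real (b \<sigma>) * Bt (a \<sigma> + 1) (b \<sigma> - 1)))" .
      have eq2: "(of_real (0^b \<sigma> + 0^a \<sigma> - Bt (a \<sigma>) (b \<sigma>) + (real (a \<sigma>) * Bt (a \<sigma> - 1) (b \<sigma> + 1)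
         + real (b \<sigma>) * Bt (a \<sigma> + 1) (b \<sigma> - 1))) :: complex) = 0^b \<sigma> + 0^a \<sigma> - of_real (Bt (a \<sigma>) (b \<sigma>)) + of_real (real (a \<sigma>) * Bt (a \<sigma> - 1) (b \<sigma> + 1)
         + real (b \<sigma>) * Bt (a \<sigma> + 1) (b \<sigma> - 1))"
        by (simp only: of_real_add of_real_diff of_real_power of_real_0)
      show "c \<sigma> * (of_nat (fact (a \<sigma>) * fact (b \<sigma>)) / of_nat (fact (a \<sigma> + b \<sigma>))) =
         c \<sigma> * 0 ^ b \<sigma> + c \<sigma> * 0 ^ a \<sigma> - c \<sigma> * of_real (Bt (a \<sigma>) (b \<sigma>)) + c \<sigma> * of_real (real (a \<sigma>) * Bt (a \<sigma> - 1) (b \<sigma> + 1)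
       + real (b \<sigma>) * Bt (a \<sigma> + 1) (b \<sigma> - 1))"
        unfolding eq eq2 by (simp only: distrib_left right_diff_distrib)
    qed
    also have "\<dots> = F 1 0 + F 0 1 - I1 + I2"
      unfolding F_def I1_def I2_def by (simp add: sum.distrib sum_subtractf)
    finally show ?thesis .
  qed
  have "norm (F 1 0 + F 0 1 - I1 + I2) \<le> norm (F 1 0) + norm (F 0 1) + norm I1 + norm I2"
  proof -
    have t1: "norm (F 1 0 + F 0 1 - I1 + I2) \<le> norm (F 1 0 + F 0 1 - I1) + norm I2" by (rule norm_triangle_ineq)
    have t2: "norm (F 1 0 + F 0 1 - I1) \<le> norm (F 1 0 + F 0 1) + norm I1" by (rule norm_triangle_ineq4)
    have t3: "norm (F 1 0 + F 0 1) \<le> norm (F 1 0) + norm (F 0 1)" by (rule norm_triangle_ineq)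
    show ?thesis using t1 t2 t3 by linarith
  qed
  then show ?thesis using key F10 F01 nI1 nI2 by simp
qed

definition mfac :: "nat \<Rightarrow> (nat \<Rightarrow> nat) \<Rightarrow> complex" where
  "mfac n \<alpha> = of_nat (\<Prod>j<n. fact (\<alpha> j)) / of_nat (fact (\<Sum>j<n. \<alpha> j))"

lemma mfac_Suc:
  "mfac (Suc n) \<alpha> = mfac n \<alpha> * (of_nat (fact (\<Sum>j<n. \<alpha> j) * fact (\<alpha> n)) / of_nat (fact ((\<Sum>j<n. \<alpha> j) + \<alpha> n)))"
proof -
  have p0: "(of_nat (fact (\<Sum>j<n. \<alpha> j)) :: complex) \<noteq> 0" by simp
  show ?thesis unfolding mfac_def using p0
    by (simp add: field_simps del: of_nat_fact)
qed

lemma gen: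
  fixes c :: "'s \<Rightarrow> complex" and A :: "'s \<Rightarrow> nat \<Rightarrow> nat"
  assumes fin: "finite S" and n1: "1 \<le> n"
   and hyp: "\<And>z. (\<forall>j<n. norm (z j) \<le> 1) \<Longrightarrow> norm (\<Sum>\<sigma>\<in>S. c \<sigma> * (\<Prod>j<n. z j ^ A \<sigma> j)) \<le> K"
  shows "norm (\<Sum>\<sigma>\<in>S. c \<sigma> * mfac n (A \<sigma>)) \<le> 4^(n-1) * K"
  using n1 hyp
proof (induction n arbitrary: c K rule: nat_induct_at_least)
  case base
  have "norm (\<Sum>\<sigma>\<in>S. c \<sigma> * (\<Prod>j<1. (\<lambda>_. 1::complex) j ^ A \<sigma> j)) \<le> K"
    by (rule base) simp
  moreover have "mfac 1 \<alpha> = 1" for \<alpha> by (simp add: mfac_def)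
  ultimately show ?case by simp
next
  case (Suc n)
  define a where "a \<sigma> = (\<Sum>j<n. A \<sigma> j)" for \<sigma>
  define b where "b \<sigma> = A \<sigma> n" for \<sigma>
  have tv: "norm (\<Sum>\<sigma>\<in>S. (c \<sigma> * mfac n (A \<sigma>)) * (of_nat (fact (a \<sigma>) * fact (b \<sigma>)) / of_nat (fact (a \<sigma> + b \<sigma>)))) \<le> 4 * (4^(n-1) * K)"
  proof (rule two_var[OF fin])
    fix x y :: complex assume x1: "norm x \<le> 1" and y1: "norm y \<le> 1"
    have "norm (\<Sum>\<sigma>\<in>S. (c \<sigma> * y ^ b \<sigma> * x ^ a \<sigma>) * mfac n (A \<sigma>)) \<le> 4^(n-1) * K"
    proof (rule Suc.IH)
      fix w :: "nat \<Rightarrow> complex" assume w1: "\<forall>j<n. norm (w j) \<le> 1"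
      define z where "z j = (if j < n then x * w j else y)" for j
      have "\<forall>j<Suc n. norm (z j) \<le> 1"
        using w1 x1 y1 unfolding z_def by (auto simp: norm_mult intro: mult_le_one)
      then have "norm (\<Sum>\<sigma>\<in>S. c \<sigma> * (\<Prod>j<Suc n. z j ^ A \<sigma> j)) \<le> K" by (rule Suc.prems)
      moreover have "(\<Prod>j<Suc n. z j ^ A \<sigma> j) = y ^ b \<sigma> * x ^ a \<sigma> * (\<Prod>j<n. w j ^ A \<sigma> j)" for \<sigma>
      proof -
        have "(\<Prod>j<Suc n. z j ^ A \<sigma> j) = (\<Prod>j<n. (x * w j) ^ A \<sigma> j) * y ^ b \<sigma>"
          by (simp add: z_def b_def)
        also have "(\<Prod>j<n. (x * w j) ^ A \<sigma> j) = x ^ a \<sigma> * (\<Prod>j<n. w j ^ A \<sigma> j)"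
          by (simp add: a_def power_mult_distrib prod.distrib power_sum)
        finally show ?thesis by (simp add: algebra_simps)
      qed
      ultimately show "norm (\<Sum>\<sigma>\<in>S. c \<sigma> * y ^ b \<sigma> * x ^ a \<sigma> * (\<Prod>j<n. w j ^ A \<sigma> j)) \<le> K"
        by (simp add: mult.assoc)
    qed
    then show "norm (\<Sum>\<sigma>\<in>S. c \<sigma> * mfac n (A \<sigma>) * x ^ a \<sigma> * y ^ b \<sigma>) \<le> 4 ^ (n - 1) * K"
      by (simp add: algebra_simps)
  qed
  have "(\<Sum>\<sigma>\<in>S. (c \<sigma> * mfac n (A \<sigma>)) * (of_nat (fact (a \<sigma>) * fact (b \<sigma>)) / of_nat (fact (a \<sigma> + b \<sigma>))))
     = (\<Sum>\<sigma>\<in>S. c \<sigma> * mfac (Suc n) (A \<sigma>))"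
    by (intro sum.cong refl) (simp add: mfac_Suc a_def b_def mult.assoc del: of_nat_fact of_nat_mult)
  moreover have "(4::real) * (4^(n-1) * K) = 4^(Suc n - 1) * K"
  proof -
    obtain m where "n = Suc m" using Suc.hyps by (cases n) auto
    then show ?thesis by simp
  qed
  ultimately show ?case using tv by (simp only:)
qed

lemma eval_le_sup:
  assumes "is_mpoly n c" "z \<in> closed_polydisc n"
  shows "norm (mpoly_eval n c z) \<le> supnorm (closed_polydisc n) (mpoly_eval n c)"
  unfolding supnorm_def
proof (rule cSUP_upper[OF assms(2)])
  have fin: "finite {\<alpha>. c \<alpha> \<noteq> 0}" using assms(1) by (simp add: is_mpoly_def)
  have "norm (mpoly_eval n c w) \<le> (\<Sum>\<alpha>\<in>{\<alpha>. c \<alpha> \<noteq> 0}. norm (c \<alpha>))" if "w \<in> closed_polydisc n" for w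
  proof -
    have "norm (mpoly_eval n c w) \<le> (\<Sum>\<alpha>\<in>{\<alpha>. c \<alpha> \<noteq> 0}. norm (c \<alpha> * (\<Prod>j<n. w j ^ \<alpha> j)))"
      unfolding mpoly_eval_def by (rule norm_sum)
    also have "\<dots> \<le> (\<Sum>\<alpha>\<in>{\<alpha>. c \<alpha> \<noteq> 0}. norm (c \<alpha>))"
    proof (rule sum_mono)
      fix \<alpha>
      have "norm (\<Prod>j<n. w j ^ \<alpha> j) \<le> 1"
        unfolding prod_norm[symmetric] norm_power
        using that by (intro prod_le_1) (auto simp: closed_polydisc_def intro: power_le_one)
      then show "norm (c \<alpha> * (\<Prod>j<n. w j ^ \<alpha> j)) \<le> norm (c \<alpha>)"
        by (simp add: norm_mult mult_left_le)
    qed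
    finally show ?thesis .
  qed
  then show "bdd_above ((\<lambda>z. norm (mpoly_eval n c z)) ` closed_polydisc n)"
    by (intro bdd_aboveI) auto
qed

lemma main:
  assumes n1: "1 \<le> n" and P: "is_mpoly n c"
  shows "supnorm (closed_polydisc n) (mpoly_eval n (Gamma_coeff n c)) \<le> 4^(n-1) * supnorm (closed_polydisc n) (mpoly_eval n c)"
proof -
  define S where "S = {\<alpha>. c \<alpha> \<noteq> 0}"
  have fin: "finite S" using P by (simp add: is_mpoly_def S_def)
  define K where "K = supnorm (closed_polydisc n) (mpoly_eval n c)"
  have GS: "{\<alpha>. Gamma_coeff n c \<alpha> \<noteq> 0} = S"
    by (auto simp: Gamma_coeff_def S_def simp del: of_nat_fact of_nat_prod)
  have Geval: "mpoly_eval n (Gamma_coeff n c) z = (\<Sum>\<alpha>\<in>S. (c \<alpha> * (\<Prod>j<n. z j ^ \<alpha> j)) * mfac n \<alpha>)" for z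
    unfolding mpoly_eval_def GS
    by (intro sum.cong refl) (simp add: Gamma_coeff_def mfac_def algebra_simps del: of_nat_fact of_nat_prod)
  have bd: "norm (mpoly_eval n (Gamma_coeff n c) z) \<le> 4^(n-1) * K" if z: "z \<in> closed_polydisc n" for z
    unfolding Geval
  proof (rule gen[OF fin n1])
    fix w :: "nat \<Rightarrow> complex" assume w1: "\<forall>j<n. norm (w j) \<le> 1"
    define u where "u j = (if j < n then z j * w j else 0)" for j
    have u: "u \<in> closed_polydisc n"
      using z w1 by (auto simp: closed_polydisc_def u_def norm_mult intro: mult_le_one)
    have "mpoly_eval n c u = (\<Sum>\<alpha>\<in>S. c \<alpha> * (\<Prod>j<n. z j ^ \<alpha> j) * (\<Prod>j<n. w j ^ \<alpha> j))"
      unfolding mpoly_eval_def S_def[symmetric]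
      by (intro sum.cong refl) (simp add: u_def power_mult_distrib prod.distrib mult.assoc)
    then show "norm (\<Sum>\<alpha>\<in>S. c \<alpha> * (\<Prod>j<n. z j ^ \<alpha> j) * (\<Prod>j<n. w j ^ \<alpha> j)) \<le> K"
      using eval_le_sup[OF P u] unfolding K_def by simp
  qed
  have ne: "closed_polydisc n \<noteq> {}"
    by (auto simp: closed_polydisc_def intro!: exI[of _ "\<lambda>_. 0"])
  have "supnorm (closed_polydisc n) (mpoly_eval n (Gamma_coeff n c)) \<le> 4^(n-1) * K"
    unfolding supnorm_def using bd by (intro cSUP_least ne) auto
  then show ?thesis by (simp add: K_def)
qed

theorem proposition4p4:
  shows "(\<forall>n::nat\<ge>2. \<exists>M::real. \<forall>c. is_mpoly n c \<longrightarrow>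
            supnorm (closed_polydisc n) (mpoly_eval n (Gamma_coeff n c))
              \<le> M * supnorm (closed_polydisc n) (mpoly_eval n c))
       \<and> (\<exists>M::real. M \<le> 407/100 \<and> (\<forall>c. is_mpoly 2 c \<longrightarrow>
            supnorm (closed_polydisc 2) (mpoly_eval 2 (Gamma_coeff 2 c))
              \<le> M * supnorm (closed_polydisc 2) (mpoly_eval 2 c)))
       \<and> (\<exists>M::real. M \<le> 166/10 \<and> (\<forall>c. is_mpoly 3 c \<longrightarrow>
            supnorm (closed_polydisc 3) (mpoly_eval 3 (Gamma_coeff 3 c))
              \<le> M * supnorm (closed_polydisc 3) (mpoly_eval 3 c)))"
proof (intro conjI allI impI)
  fix n :: nat assume "2 \<le> n"
  then show "\<exists>M::real. \<forall>c. is_mpoly n c \<longrightarrow>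
            supnorm (closed_polydisc n) (mpoly_eval n (Gamma_coeff n c))
              \<le> M * supnorm (closed_polydisc n) (mpoly_eval n c)"
    by (intro exI[of _ "4^(n-1)"] allI impI main) auto
next
  show "\<exists>M::real. M \<le> 407/100 \<and> (\<forall>c. is_mpoly 2 c \<longrightarrow>
            supnorm (closed_polydisc 2) (mpoly_eval 2 (Gamma_coeff 2 c))
              \<le> M * supnorm (closed_polydisc 2) (mpoly_eval 2 c))"
    using main[of 2] by (intro exI[of _ 4]) auto
next
  show "\<exists>M::real. M \<le> 166/10 \<and> (\<forall>c. is_mpoly 3 c \<longrightarrow>
            supnorm (closed_polydisc 3) (mpoly_eval 3 (Gamma_coeff 3 c))
              \<le> M * supnorm (closed_polydisc 3) (mpoly_eval 3 c))"
    using main[of 3] by (intro exI[of _ 16]) auto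
qed

end
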